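(* Let $p\ge 2$, $m,L\in\mathbb{N}$ with $L\ge 1$, and let $z_1^{[0,T_1-1]},\dots,z_p^{[0,T_p-1]}$ be finite signal sequences with $z_i(k)\in\mathbb{R}^m$ and $T_i\ge L$. Then: 1) If $\{z_i^{[0,T_i-1]}\}_{i=1}^p$ are CCPE of order $L$ (so in particular $T_1=\dots=T_p=:T_0$), then they are also MCPE of order $L$, and also HCPE of order $L$ (for a split index $\bar p$, i.e. viewing $z_1,\dots,z_{\bar p}$ as the cumulative part and $z_{\bar p+1},\dots,z_p$ as the mosaic part). 2) Suppose $\{z_i^{[0,T_i-1]}\}_{i=1}^p$ are MCPE of order $L$. i) If $T_0=T_1=\dots=T_p$ and, for every choice of nonzero weights $\alpha_1,\dots,\alpha_p$, $\operatorname{im}\big(H_L^{mos}(\{z_i^{[0,T_i-1]}\}_{i=1}^p)^\top\big)\cap\operatorname{leftker}\big(\mathbf{1}_p\otimes I_{T_0-L+1}\big)=\{0\}$, then $\{z_i^{[0,T_i-1]}\}_{i=1}^p$ are also CCPE of order $L$. ii) If $T_0=T_1=\dots=T_{\bar p}$ for some $1\le\bar p<p$ and, for every choice of nonzero weights, $\operatorname{im}\big(H_L^{mos}(\{z_i^{[0,T_i-1]}\}_{i=1}^{p})^\top\big)\cap\operatorname{leftker}\Big(\begin{bmatrix}\mathbf{1}_{\bar p}\otimes I_{T_0-L+1}&0\\0&I_{S}\end{bmatrix}\Big)=\{0\}$ with $S=\sum_{i=\bar p+1}^p(T_i-L+1)$, then $\{z_i^{[0,T_i-1]}\}_{i=1}^p$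 are also HCPE of order $L$ (with cumulative part $z_1,\dots,z_{\bar p}$). 3) Suppose $\{z_i^{[0,T_i-1]}\}_{i=1}^p$ are HCPE of order $L$ with cumulative part $z_1,\dots,z_{\bar p}$ (common length $T_0$) and mosaic part $z_{\bar p+1},\dots,z_p$. Then i) $\{z_i^{[0,T_i-1]}\}_{i=1}^p$ are also MCPE of order $L$; ii) if moreover $T_0=T_{\bar p+1}=\dots=T_p$ and, for every choice of nonzero weights, $\operatorname{im}\big(H_L^{hyb}(\{z_i^{[0,T_i-1]}\}_{i=1}^p)^\top\big)\cap\operatorname{leftker}\big(\mathbf{1}_{p-\bar p+1}\otimes I_{T_0-L+1}\big)=\{0\}$, then $\{z_i^{[0,T_i-1]}\}_{i=1}^p$ are also CCPE of order $L$.
   Context: For a sequence $z^{[0,T-1]}=(z(0),\dots,z(T-1))$ with $z(k)\in\mathbb{R}^m$ and $L\le T$, the block Hankel matrix of order $L$ is $H_L(z^{[0,T-1]})\in\mathbb{R}^{mL\times(T-L+1)}$ whose $(r,c)$ block entry ($r=0,\dots,L-1$, $c=0,\dots,T-L$) is $z(r+c)$. Given nonzero real weights $\alpha_1,\dots,\alpha_p$: - $H_L^{mos}(\{z_i^{[0,T_i-1]}\}_{i=1}^p)=[\alpha_1H_L(z_1^{[0,T_1-1]})\ \cdots\ \alpha_pH_L(z_p^{[0,T_p-1]})]$; the signals are mosaic collectively persistently exciting (MCPE) of order $L$ if this matrix has full row rank $mL$ for every choice of nonzero $\alpha_i$. - If all lengths equal $T_0$: $H_L^{cum}(\{z_i^{[0,T_0-1]}\}_{i=1}^p)=\sum_{i=1}^p\alpha_iH_L(z_i^{[0,T_0-1]})$;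 the signals are cumulative collectively persistently exciting (CCPE) of order $L$ if this matrix has full row rank $mL$ for every choice of nonzero $\alpha_i$. - If $z_1,\dots,z_{\bar p}$ have common length $T_0$ and $z_{\bar p+1},\dots,z_p$ have lengths $T_i$: $H_L^{hyb}(\{z_i\}_{i=1}^p)=[\,H_L^{cum}(\{z_i^{[0,T_0-1]}\}_{i=1}^{\bar p})\ \ H_L^{mos}(\{z_i^{[0,T_i-1]}\}_{i=\bar p+1}^p)\,]$; the signals are hybrid collectively persistently exciting (HCPE) of order $L$ if this matrix has full row rank $mL$ for every choice of nonzero $\alpha_i$. For a matrix $M$, $\operatorname{leftker}M$ is the space of row vectors $v$ with $vM=0$; it is identified with a subspace of column vectors (by transposition) when intersected with $\operatorname{im}(H^\top)$. $\mathbf{1}_q$ is the all-ones column vector of length $q$, $\otimes$ the Kronecker product. *)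

theory Defs
  imports "Jordan_Normal_Form.DL_Rank"
begin

text \<open>A signal z :: nat => real vec, with z k in carrier_vec m for k < T (only samples
  z 0, ..., z (T-1) are used). Signals are indexed by i in {1..p}.\<close>

definition hankel :: "nat \<Rightarrow> nat \<Rightarrow> nat \<Rightarrow> (nat \<Rightarrow> real vec) \<Rightarrow> real mat" where
  "hankel m L T z = mat (m * L) (T - L + 1) (\<lambda>(r, c). z (r div m + c) $ (r mod m))"

definition hcat :: "'a::zero mat \<Rightarrow> 'a mat \<Rightarrow> 'a mat" where
  "hcat A B = four_block_mat A B (0\<^sub>m 0 (dim_col A)) (0\<^sub>m 0 (dim_col B))"

fun hcat_list :: "nat \<Rightarrow> 'a::zero mat list \<Rightarrow> 'a mat" where
  "hcat_list nr [] = 0\<^sub>m nr 0"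
| "hcat_list nr (A # As) = hcat A (hcat_list nr As)"

definition H_mos :: "nat \<Rightarrow> nat \<Rightarrow> nat \<Rightarrow> nat \<Rightarrow> (nat \<Rightarrow> nat) \<Rightarrow> (nat \<Rightarrow> nat \<Rightarrow> real vec)
    \<Rightarrow> (nat \<Rightarrow> real) \<Rightarrow> real mat" where
  "H_mos m L a b T z \<alpha> =
     hcat_list (m * L) (map (\<lambda>i. \<alpha> i \<cdot>\<^sub>m hankel m L (T i) (z i)) [a..<b + 1])"

definition H_cum :: "nat \<Rightarrow> nat \<Rightarrow> nat \<Rightarrow> nat \<Rightarrow> nat \<Rightarrow> (nat \<Rightarrow> nat \<Rightarrow> real vec)
    \<Rightarrow> (nat \<Rightarrow> real) \<Rightarrow> real mat" where
  "H_cum m L a b T0 z \<alpha> =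
     mat (m * L) (T0 - L + 1) (\<lambda>(r, c). \<Sum>i\<in>{a..b}. \<alpha> i * hankel m L T0 (z i) $$ (r, c))"

definition H_hyb :: "nat \<Rightarrow> nat \<Rightarrow> nat \<Rightarrow> nat \<Rightarrow> (nat \<Rightarrow> nat) \<Rightarrow> (nat \<Rightarrow> nat \<Rightarrow> real vec)
    \<Rightarrow> (nat \<Rightarrow> real) \<Rightarrow> real mat" where
  "H_hyb m L p pb T z \<alpha> = hcat (H_cum m L 1 pb (T 1) z \<alpha>) (H_mos m L (pb + 1) p T z \<alpha>)"

definition full_row_rank :: "real mat \<Rightarrow> bool" where
  "full_row_rank A \<longleftrightarrow> vec_space.rank (dim_row A) A = dim_row A"

definition nonzero_weights :: "nat \<Rightarrow> (nat \<Rightarrow> real) \<Rightarrow> bool" where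
  "nonzero_weights p \<alpha> \<longleftrightarrow> (\<forall>i\<in>{1..p}. \<alpha> i \<noteq> 0)"

definition MCPE :: "nat \<Rightarrow> nat \<Rightarrow> nat \<Rightarrow> (nat \<Rightarrow> nat) \<Rightarrow> (nat \<Rightarrow> nat \<Rightarrow> real vec) \<Rightarrow> bool" where
  "MCPE m L p T z \<longleftrightarrow> (\<forall>\<alpha>. nonzero_weights p \<alpha> \<longrightarrow> full_row_rank (H_mos m L 1 p T z \<alpha>))"

text \<open>CCPE presupposes all lengths equal (common length T0 = T 1).\<close>
definition CCPE :: "nat \<Rightarrow> nat \<Rightarrow> nat \<Rightarrow> (nat \<Rightarrow> nat) \<Rightarrow> (nat \<Rightarrow> nat \<Rightarrow> real vec) \<Rightarrow> bool" where
  "CCPE m L p T z \<longleftrightarrow> (\<forall>i\<in>{1..p}. T i = T 1) \<and>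
     (\<forall>\<alpha>. nonzero_weights p \<alpha> \<longrightarrow> full_row_rank (H_cum m L 1 p (T 1) z \<alpha>))"

definition HCPE :: "nat \<Rightarrow> nat \<Rightarrow> nat \<Rightarrow> nat \<Rightarrow> (nat \<Rightarrow> nat) \<Rightarrow> (nat \<Rightarrow> nat \<Rightarrow> real vec) \<Rightarrow> bool" where
  "HCPE m L p pb T z \<longleftrightarrow> (\<forall>i\<in>{1..pb}. T i = T 1) \<and>
     (\<forall>\<alpha>. nonzero_weights p \<alpha> \<longrightarrow> full_row_rank (H_hyb m L p pb T z \<alpha>))"

definition ones_kron_id :: "nat \<Rightarrow> nat \<Rightarrow> real mat" where
  "ones_kron_id q n = mat (q * n) n (\<lambda>(r, c). if r mod n = c then 1 else 0)"

text \<open>Row space im(H^T) (as column vectors) and left kernel of K (transposed to columns).\<close>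
definition im_transpose :: "real mat \<Rightarrow> real vec set" where
  "im_transpose H = {w. \<exists>u \<in> carrier_vec (dim_row H). w = transpose_mat H *\<^sub>v u}"

definition leftker :: "real mat \<Rightarrow> real vec set" where
  "leftker K = {v \<in> carrier_vec (dim_row K). transpose_mat K *\<^sub>v v = 0\<^sub>v (dim_col K)}"

end

theory Submission
  imports Defs
begin


lemma (in vec_space) rank_full_iff_span:
  assumes A: "A \<in> carrier_mat n nc"
  shows "rank A = n \<longleftrightarrow> span (set (cols A)) = carrier_vec n"
proof
  assume r: "rank A = n"
  obtain S where S: "maximal S (\<lambda>T. T \<subseteq> set (cols A) \<and> lin_indpt T)"
    using maximal_exists[of "(\<lambda>T. T \<subseteq> set (cols A) \<and> lin_indpt T)" "card (set (cols A))" "{}"]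
    by (meson List.finite_set card_mono empty_iff empty_subsetI finite_lin_indpt2 rev_finite_subset)
  have cS: "card S = n" using rank_card_indpt[OF A S] r by simp
  have sub: "S \<subseteq> set (cols A)" and li: "lin_indpt S" using S unfolding maximal_def by auto
  have colsc: "set (cols A) \<subseteq> carrier_vec n" using A cols_dim by blast
  have fS: "finite S" using sub finite_subset by blast
  have "basis S" 
    by (rule dim_li_is_basis[OF fin_dim fS _ li], use sub colsc in auto, simp add: cS dim_is_n)
  then have "span S = carrier_vec n" unfolding basis_def by simp
  moreover have "span S \<subseteq> span (set (cols A))" using span_is_monotone[OF sub] .
  moreover have "span (set (cols A)) \<subseteq> carrier_vec n" using span_is_subset2[OF colsc] by simp
  ultimately show "span (set (cols A)) = carrier_vec n" by auto
next
  assume sp: "span (set (cols A)) = carrier_vec n"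
  have "span_vs (set (cols A)) = V" using sp by simp
  then show "rank A = n" unfolding rank_def using dim_is_n by simp
qed

lemma (in vec_space) rank_full_iff_surj:
  assumes A: "A \<in> carrier_mat n nc"
  shows "rank A = n \<longleftrightarrow> (\<forall>y\<in>carrier_vec n. \<exists>x\<in>carrier_vec nc. A *\<^sub>v x = y)"
proof -
  have "span (set (cols A)) = {y\<in>carrier_vec n. \<exists>x\<in>carrier_vec nc. A *\<^sub>v x = y}"
    using col_space_eq[OF A] A unfolding col_space_def by simp
  then show ?thesis using rank_full_iff_span[OF A] by auto
qed

lemma self_scalar_zero:
  fixes u :: "real vec"
  assumes "u \<bullet> u = 0" shows "u = 0\<^sub>v (dim_vec u)"
proof -
  have "(\<Sum>i\<in>{0..<dim_vec u}. u $ i * u $ i) = 0" using assms unfolding scalar_prod_def by simp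
  then have "\<forall>i\<in>{0..<dim_vec u}. u $ i * u $ i = 0"
    by (subst sum_nonneg_eq_0_iff[symmetric]) auto
  then show ?thesis by (intro eq_vecI) auto
qed

lemma frr_iff:
  fixes A :: "real mat"
  shows "full_row_rank A \<longleftrightarrow>
    (\<forall>u\<in>carrier_vec (dim_row A). transpose_mat A *\<^sub>v u = 0\<^sub>v (dim_col A) \<longrightarrow> u = 0\<^sub>v (dim_row A))"
proof -
  define n where "n = dim_row A"
  define nc where "nc = dim_col A"
  have A: "A \<in> carrier_mat n nc" unfolding n_def nc_def by auto
  have At: "transpose_mat A \<in> carrier_mat nc n" using A by auto
  show ?thesis unfolding full_row_rank_def n_def[symmetric] nc_def[symmetric]
  proof
    assume r: "vec_space.rank n A = n"
    show "\<forall>u\<in>carrier_vec n. transpose_mat A *\<^sub>v u = 0\<^sub>v nc \<longrightarrow> u = 0\<^sub>v n"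
    proof (intro ballI impI)
      fix u :: "real vec" assume u: "u \<in> carrier_vec n" and z: "transpose_mat A *\<^sub>v u = 0\<^sub>v nc"
      obtain x where x: "x \<in> carrier_vec nc" "A *\<^sub>v x = u"
        using vec_space.rank_full_iff_surj[OF A] r u by blast
      have "u \<bullet> u = u \<bullet> (A *\<^sub>v x)" using x by simp
      also have "\<dots> = (transpose_mat A *\<^sub>v u) \<bullet> x" using transpose_vec_mult_scalar[OF A x(1) u] by simp
      also have "\<dots> = 0" using z x by simp
      finally show "u = 0\<^sub>v n" using self_scalar_zero u by fastforce
    qed
  next
    assume inj: "\<forall>u\<in>carrier_vec n. transpose_mat A *\<^sub>v u = 0\<^sub>v nc \<longrightarrow> u = 0\<^sub>v n"
    define G where "G = A * transpose_mat A"
    have G: "G \<in> carrier_mat n n" unfolding G_def using A At by auto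
    have "\<not> (\<exists>v. v \<in> carrier_vec n \<and> v \<noteq> 0\<^sub>v n \<and> G *\<^sub>v v = 0\<^sub>v n)"
    proof
      assume "\<exists>v. v \<in> carrier_vec n \<and> v \<noteq> 0\<^sub>v n \<and> G *\<^sub>v v = 0\<^sub>v n"
      then obtain v where v: "v \<in> carrier_vec n" "v \<noteq> 0\<^sub>v n" "G *\<^sub>v v = 0\<^sub>v n" by blast
      define w where "w = transpose_mat A *\<^sub>v v"
      have w: "w \<in> carrier_vec nc" unfolding w_def using At v by auto
      have "G *\<^sub>v v = A *\<^sub>v w" unfolding G_def w_def using A At v by (simp add: assoc_mult_mat_vec)
      have "w \<bullet> w = v \<bullet> (A *\<^sub>v w)" unfolding w_def using transpose_vec_mult_scalar[OF A w v(1)] w_def by simp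
      also have "\<dots> = v \<bullet> 0\<^sub>v n" using \<open>G *\<^sub>v v = A *\<^sub>v w\<close> v by simp
      also have "\<dots> = 0" using v by simp
      finally have "w = 0\<^sub>v nc" using self_scalar_zero w by fastforce
      then show False using inj v w_def by metis
    qed
    then have "det G \<noteq> 0" using det_0_iff_vec_prod_zero_field[OF G] by blast
    then have "vec_space.rank n G = n" using vec_space.det_rank_iff[OF G] by blast
    then have sG: "\<forall>y\<in>carrier_vec n. \<exists>x\<in>carrier_vec n. G *\<^sub>v x = y"
      using vec_space.rank_full_iff_surj[OF G] by blast
    have "\<forall>y\<in>carrier_vec n. \<exists>x\<in>carrier_vec nc. A *\<^sub>v x = y"
    proof
      fix y :: "real vec" assume "y \<in> carrier_vec n"
      then obtain x where x: "x \<in> carrier_vec n" "G *\<^sub>v x = y" using sG by blast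
      have "A *\<^sub>v (transpose_mat A *\<^sub>v x) = y" using x A At unfolding G_def by (simp add: assoc_mult_mat_vec)
      moreover have "transpose_mat A *\<^sub>v x \<in> carrier_vec nc" using At x by auto
      ultimately show "\<exists>x\<in>carrier_vec nc. A *\<^sub>v x = y" by blast
    qed
    then show "vec_space.rank n A = n" using vec_space.rank_full_iff_surj[OF A] by blast
  qed
qed


lemma hcat_dims[simp]: "dim_row (hcat A B) = dim_row A" "dim_col (hcat A B) = dim_col A + dim_col B"
  unfolding hcat_def by auto

lemma hcat_index[simp]: "i < dim_row A \<Longrightarrow> j < dim_col A + dim_col B \<Longrightarrow>
  hcat A B $$ (i,j) = (if j < dim_col A then A $$ (i,j) else B $$ (i, j - dim_col A))"
  unfolding hcat_def by auto

lemma hcat_carrier[simp,intro]: "A \<in> carrier_mat nr c1 \<Longrightarrow> B \<in> carrier_mat nr c2 \<Longrightarrow> hcat A B \<in> carrier_mat nr (c1+c2)"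
  by auto

lemma hcat_list_carrier: "(\<forall>A\<in>set As. dim_row A = nr) \<Longrightarrow> hcat_list nr As \<in> carrier_mat nr (sum_list (map dim_col As))"
  by (induction As) auto

lemma hcat_list_append: "(\<forall>A\<in>set (xs@ys). dim_row A = nr) \<Longrightarrow>
   hcat_list nr (xs@ys) = hcat (hcat_list nr xs) (hcat_list nr ys)"
proof (induction xs)
  case Nil
  have c: "hcat_list nr ys \<in> carrier_mat nr (sum_list (map dim_col ys))" using hcat_list_carrier Nil by auto
  show ?case by (rule eq_matI, use c in auto)
next
  case (Cons x xs)
  have c1: "hcat_list nr ys \<in> carrier_mat nr (sum_list (map dim_col ys))" using hcat_list_carrier Cons by auto
  have c2: "hcat_list nr xs \<in> carrier_mat nr (sum_list (map dim_col xs))" using hcat_list_carrier Cons by auto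
  have x: "dim_row x = nr" using Cons by auto
  have "hcat_list nr ((x#xs)@ys) = hcat x (hcat (hcat_list nr xs) (hcat_list nr ys))" using Cons by auto
  also have "\<dots> = hcat (hcat x (hcat_list nr xs)) (hcat_list nr ys)"
    by (rule eq_matI, use c1 c2 x in auto)
  finally show ?case by simp
qed

lemma hcat_mult_four_block:
  assumes "X \<in> carrier_mat nr a" "Y \<in> carrier_mat nr b" "P \<in> carrier_mat a c" "Q \<in> carrier_mat a d"
    "R \<in> carrier_mat b c" "U \<in> carrier_mat b d"
  shows "hcat X Y * four_block_mat P Q R U = hcat (X*P + Y*R) (X*Q + Y*U)"
proof -
  have "hcat X Y * four_block_mat P Q R U = four_block_mat (X * P + Y * R) (X * Q + Y * U)
    (0\<^sub>m 0 a * P + 0\<^sub>m 0 b * R) (0\<^sub>m 0 a * Q + 0\<^sub>m 0 b * U)"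
    unfolding hcat_def using assms by (subst mult_four_block_mat) auto
  also have "\<dots> = hcat (X*P + Y*R) (X*Q + Y*U)"
    unfolding hcat_def using assms by (intro cong_four_block_mat) auto
  finally show ?thesis .
qed

lemma ones_kron_Suc: "ones_kron_id (Suc q) n = four_block_mat (1\<^sub>m n) (0\<^sub>m n 0) (ones_kron_id q n) (0\<^sub>m (q*n) 0)"
proof (rule eq_matI)
  fix i j assume i: "i < dim_row (four_block_mat (1\<^sub>m n) (0\<^sub>m n 0) (ones_kron_id q n) (0\<^sub>m (q*n) 0))"
    and j: "j < dim_col (four_block_mat (1\<^sub>m n) (0\<^sub>m n 0) (ones_kron_id q n) (0\<^sub>m (q*n) 0))"
  have ij: "i < Suc q * n" "j < n" using i j unfolding ones_kron_id_def by auto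
  show "ones_kron_id (Suc q) n $$ (i, j) = four_block_mat (1\<^sub>m n) (0\<^sub>m n 0) (ones_kron_id q n) (0\<^sub>m (q*n) 0) $$ (i, j)"
  proof (cases "i < n")
    case True then show ?thesis using ij unfolding ones_kron_id_def by auto
  next
    case False
    then have "(i - n) mod n = i mod n" by (simp add: mod_if)
    then show ?thesis using ij False unfolding ones_kron_id_def by auto
  qed
qed (auto simp: ones_kron_id_def)

lemma ones_kron_carrier[simp,intro]: "ones_kron_id q n \<in> carrier_mat (q*n) n"
  unfolding ones_kron_id_def by auto

lemma hcat_mult_ok:
  fixes X Y :: "real mat"
  assumes X: "X \<in> carrier_mat nr n" and Y: "Y \<in> carrier_mat nr (q*n)"
  shows "hcat X Y * ones_kron_id (Suc q) n = X + Y * ones_kron_id q n"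
proof -
  have "hcat X Y * ones_kron_id (Suc q) n = hcat (X * 1\<^sub>m n + Y * ones_kron_id q n) (X * 0\<^sub>m n 0 + Y * 0\<^sub>m (q*n) 0)"
    unfolding ones_kron_Suc by (rule hcat_mult_four_block[OF X Y]) auto
  also have "\<dots> = X + Y * ones_kron_id q n"
    by (rule eq_matI, use X Y in auto)
  finally show ?thesis .
qed

lemma hcat_list_ok:
  fixes f :: "nat \<Rightarrow> real mat"
  assumes "\<forall>i\<in>set is. f i \<in> carrier_mat nr w"
  shows "hcat_list nr (map f is) * ones_kron_id (length is) w = mat nr w (\<lambda>(r,c). \<Sum>i\<leftarrow>is. f i $$ (r,c))"
  using assms
proof (induction "is")
  case Nil
  show ?case by (rule eq_matI) (auto simp: ones_kron_id_def)
next
  case (Cons i "is")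
  have c: "hcat_list nr (map f is) \<in> carrier_mat nr (length is * w)"
  proof -
    have "map (\<lambda>x. dim_col (f x)) is = map (\<lambda>x. w) is" using Cons.prems by (intro map_cong) auto
    then have "sum_list (map dim_col (map f is)) = length is * w"
      by (simp add: sum_list_triv o_def del: map_eq_conv)
    then show ?thesis using hcat_list_carrier[of "map f is" nr] Cons.prems by auto
  qed
  have fi: "f i \<in> carrier_mat nr w" using Cons.prems by auto
  have "hcat_list nr (map f (i#is)) * ones_kron_id (length (i#is)) w
      = f i + hcat_list nr (map f is) * ones_kron_id (length is) w"
    using hcat_mult_ok[OF fi c] by simp
  also have "\<dots> = mat nr w (\<lambda>(r,c). \<Sum>i\<leftarrow>i#is. f i $$ (r,c))"
    using Cons fi by (intro eq_matI) auto
  finally show ?case .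
qed


lemma mat_vec_zero: "A \<in> carrier_mat n k \<Longrightarrow> A *\<^sub>v 0\<^sub>v k = (0\<^sub>v n :: 'a::comm_ring_1 vec)"
  by (intro eq_vecI) auto

lemma frr_factor_L1:
  fixes A K :: "real mat"
  assumes A: "A \<in> carrier_mat n k" and K: "K \<in> carrier_mat k c" and B: "full_row_rank (A * K)"
  shows "full_row_rank A"
  unfolding frr_iff
proof (intro ballI impI)
  fix u assume u: "u \<in> carrier_vec (dim_row A)" and z: "transpose_mat A *\<^sub>v u = 0\<^sub>v (dim_col A)"
  have "transpose_mat (A * K) *\<^sub>v u = transpose_mat K *\<^sub>v (transpose_mat A *\<^sub>v u)"
    using A K u by (simp add: transpose_mult assoc_mult_mat_vec)
  also have "\<dots> = 0\<^sub>v (dim_col (A * K))" using z A K mat_vec_zero[of "transpose_mat K" c k] by simp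
  finally show "u = 0\<^sub>v (dim_row A)" using B u A unfolding frr_iff by simp
qed

lemma frr_factor_L2:
  fixes A K :: "real mat"
  assumes A: "A \<in> carrier_mat n k" and K: "K \<in> carrier_mat k c" and FA: "full_row_rank A"
    and I: "im_transpose A \<inter> leftker K = {0\<^sub>v (dim_col A)}"
  shows "full_row_rank (A * K)"
  unfolding frr_iff
proof (intro ballI impI)
  fix u assume u: "u \<in> carrier_vec (dim_row (A * K))" and z: "transpose_mat (A * K) *\<^sub>v u = 0\<^sub>v (dim_col (A * K))"
  define w where "w = transpose_mat A *\<^sub>v u"
  have u': "u \<in> carrier_vec (dim_row A)" using u by simp
  have "transpose_mat (A * K) *\<^sub>v u = transpose_mat K *\<^sub>v w"
    using A K u unfolding w_def by (simp add: transpose_mult assoc_mult_mat_vec)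
  then have "transpose_mat K *\<^sub>v w = 0\<^sub>v (dim_col K)" using z by simp
  moreover have "w \<in> carrier_vec (dim_row K)" using A K u' unfolding w_def by simp
  ultimately have "w \<in> leftker K" unfolding leftker_def by simp
  moreover have "w \<in> im_transpose A" unfolding im_transpose_def w_def using u' by blast
  ultimately have "w = 0\<^sub>v (dim_col A)" using I by blast
  then show "u = 0\<^sub>v (dim_row (A * K))" using FA u' unfolding frr_iff w_def by simp
qed

declare upt_Suc[simp del]

lemma hankel_carrier[simp,intro]: "hankel m L T z \<in> carrier_mat (m*L) (T - L + 1)"
  unfolding hankel_def by simp

lemma sum_upt_set: "set [a..<b+1] = {a..b}" by auto

lemma H_mos_carrier: "H_mos m L a b T z \<alpha> \<in> carrier_mat (m*L) (\<Sum>i\<in>{a..b}. T i - L + 1)"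
proof -
  have "hcat_list (m*L) (map (\<lambda>i. \<alpha> i \<cdot>\<^sub>m hankel m L (T i) (z i)) [a..<b + 1])
     \<in> carrier_mat (m*L) (sum_list (map dim_col (map (\<lambda>i. \<alpha> i \<cdot>\<^sub>m hankel m L (T i) (z i)) [a..<b + 1])))"
    by (rule hcat_list_carrier) (auto simp: hankel_def)
  moreover have "sum_list (map dim_col (map (\<lambda>i. \<alpha> i \<cdot>\<^sub>m hankel m L (T i) (z i)) [a..<b + 1]))
      = sum_list (map (\<lambda>i. T i - L + 1) [a..<b + 1])"
    by (simp add: o_def hankel_def)
  moreover have "sum_list (map (\<lambda>i. T i - L + 1) [a..<b + 1]) = (\<Sum>i\<in>{a..b}. T i - L + 1)"
    by (subst sum_list_distinct_conv_sum_set, simp, simp only: sum_upt_set)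
  ultimately show ?thesis unfolding H_mos_def by simp
qed

lemma H_mos_carrier_eq:
  assumes "\<forall>i\<in>{a..b}. T i = T0"
  shows "H_mos m L a b T z \<alpha> \<in> carrier_mat (m*L) ((b+1-a) * (T0 - L + 1))"
proof -
  have "(\<Sum>i\<in>{a..b}. T i - L + 1) = (\<Sum>i\<in>{a..b}. T0 - L + 1)" using assms by (intro sum.cong) auto
  also have "\<dots> = (b+1-a) * (T0 - L + 1)" by simp
  finally show ?thesis using H_mos_carrier[of m L a b T z \<alpha>] by simp
qed

lemma F1:
  assumes "\<forall>i\<in>{a..b}. T i = T0"
  shows "H_mos m L a b T z \<alpha> * ones_kron_id (b+1-a) (T0-L+1) = H_cum m L a b T0 z \<alpha>"
proof -
  let ?g = "\<lambda>i. \<alpha> i \<cdot>\<^sub>m hankel m L T0 (z i)"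
  have mapeq: "map (\<lambda>i. \<alpha> i \<cdot>\<^sub>m hankel m L (T i) (z i)) [a..<b + 1] = map ?g [a..<b + 1]"
    using assms by (intro map_cong) (auto simp del: upt_Suc)
  have "H_mos m L a b T z \<alpha> = hcat_list (m*L) (map ?g [a..<b + 1])" unfolding H_mos_def by (simp only: mapeq)
  also have "\<dots> * ones_kron_id (b+1-a) (T0-L+1) = mat (m*L) (T0-L+1) (\<lambda>(r,c). \<Sum>i\<leftarrow>[a..<b + 1]. ?g i $$ (r,c))"
    using hcat_list_ok[of "[a..<b + 1]" ?g "m*L" "T0-L+1"] by (auto simp: hankel_def)
  also have "\<dots> = H_cum m L a b T0 z \<alpha>"
  proof (rule eq_matI)
    fix r c assume rc: "r < dim_row (H_cum m L a b T0 z \<alpha>)" "c < dim_col (H_cum m L a b T0 z \<alpha>)"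
    then have rc': "r < m*L" "c < T0-L+1" unfolding H_cum_def by auto
    have "(\<Sum>i\<leftarrow>[a..<b + 1]. ?g i $$ (r,c)) = (\<Sum>i\<leftarrow>[a..<b + 1]. \<alpha> i * hankel m L T0 (z i) $$ (r,c))"
      using rc' by (intro arg_cong[where f=sum_list] map_cong) (auto simp: hankel_def)
    also have "\<dots> = (\<Sum>i\<in>{a..b}. \<alpha> i * hankel m L T0 (z i) $$ (r,c))"
      by (subst sum_list_distinct_conv_sum_set, simp, simp only: sum_upt_set)
    finally show "mat (m*L) (T0-L+1) (\<lambda>(r,c). \<Sum>i\<leftarrow>[a..<b + 1]. ?g i $$ (r,c)) $$ (r, c) = H_cum m L a b T0 z \<alpha> $$ (r, c)"
      using rc' unfolding H_cum_def by simp
  qed (auto simp: H_cum_def)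
  finally show ?thesis .
qed


lemma H_mos_split:
  assumes "1 \<le> pb" "pb < p"
  shows "H_mos m L 1 p T z \<alpha> = hcat (H_mos m L 1 pb T z \<alpha>) (H_mos m L (pb+1) p T z \<alpha>)"
proof -
  have e: "p + 1 = (pb+1) + (p - pb)" using assms by simp
  have l: "[1..<p+1] = [1..<pb+1] @ [pb+1..<p+1]" unfolding e by (rule upt_add_eq_append) simp
  show ?thesis unfolding H_mos_def l map_append
    by (rule hcat_list_append) (auto simp: hankel_def)
qed

lemma F2:
  assumes "1 \<le> pb" "pb < p" "\<forall>i\<in>{1..pb}. T i = T 1"
  shows "H_hyb m L p pb T z \<alpha> = H_mos m L 1 p T z \<alpha> *
     four_block_mat (ones_kron_id pb (T 1 - L + 1)) (0\<^sub>m (pb * (T 1 - L + 1)) (\<Sum>i\<in>{pb+1..p}. T i - L + 1))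
        (0\<^sub>m (\<Sum>i\<in>{pb+1..p}. T i - L + 1) (T 1 - L + 1)) (1\<^sub>m (\<Sum>i\<in>{pb+1..p}. T i - L + 1))"
proof -
  define n0 where "n0 = T 1 - L + 1"
  define S where "S = (\<Sum>i\<in>{pb+1..p}. T i - L + 1)"
  define X where "X = H_mos m L 1 pb T z \<alpha>"
  define Y where "Y = H_mos m L (pb+1) p T z \<alpha>"
  have X: "X \<in> carrier_mat (m*L) (pb*n0)"
    using H_mos_carrier_eq[OF assms(3), of m L z \<alpha>] unfolding X_def n0_def by simp
  have Y: "Y \<in> carrier_mat (m*L) S" unfolding Y_def S_def by (rule H_mos_carrier)
  have XK: "X * ones_kron_id pb n0 = H_cum m L 1 pb (T 1) z \<alpha>"
    using F1[OF assms(3), of m L z \<alpha>] unfolding X_def n0_def by simp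
  have HM: "H_mos m L 1 p T z \<alpha> = hcat X Y" unfolding X_def Y_def by (rule H_mos_split[OF assms(1,2)])
  have E1: "hcat X Y * four_block_mat (ones_kron_id pb n0) (0\<^sub>m (pb * n0) S) (0\<^sub>m S n0) (1\<^sub>m S)
     = hcat (X * ones_kron_id pb n0 + Y * 0\<^sub>m S n0) (X * 0\<^sub>m (pb * n0) S + Y * 1\<^sub>m S)"
    by (rule hcat_mult_four_block[OF X Y]) auto
  have E2: "X * ones_kron_id pb n0 + Y * 0\<^sub>m S n0 = H_cum m L 1 pb (T 1) z \<alpha>"
  proof -
    have "Y * 0\<^sub>m S n0 = 0\<^sub>m (m*L) n0" using Y by (rule right_mult_zero_mat)
    moreover have "X * ones_kron_id pb n0 \<in> carrier_mat (m*L) n0" using X by auto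
    ultimately show ?thesis using XK by simp
  qed
  have E3: "X * 0\<^sub>m (pb * n0) S + Y * 1\<^sub>m S = Y"
  proof -
    have "X * 0\<^sub>m (pb * n0) S = 0\<^sub>m (m*L) S" using X by (rule right_mult_zero_mat)
    moreover have "Y * 1\<^sub>m S = Y" using Y by (rule right_mult_one_mat)
    ultimately show ?thesis using Y by simp
  qed
  have "H_mos m L 1 p T z \<alpha> * four_block_mat (ones_kron_id pb n0) (0\<^sub>m (pb * n0) S) (0\<^sub>m S n0) (1\<^sub>m S)
     = hcat (H_cum m L 1 pb (T 1) z \<alpha>) Y" unfolding HM E1 E2 E3 ..
  then have "H_mos m L 1 p T z \<alpha> * four_block_mat (ones_kron_id pb n0) (0\<^sub>m (pb * n0) S) (0\<^sub>m S n0) (1\<^sub>m S)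
     = H_hyb m L p pb T z \<alpha>" unfolding H_hyb_def Y_def .
  then show ?thesis unfolding n0_def S_def by simp
qed



lemma F3:
  assumes "1 \<le> pb" "pb < p" "\<forall>i\<in>{1..p}. T i = T 1"
  shows "H_hyb m L p pb T z \<alpha> * ones_kron_id (p - pb + 1) (T 1 - L + 1) = H_cum m L 1 p (T 1) z \<alpha>"
proof -
  define n0 where "n0 = T 1 - L + 1"
  define X where "X = H_cum m L 1 pb (T 1) z \<alpha>"
  define Y where "Y = H_mos m L (pb+1) p T z \<alpha>"
  have X: "X \<in> carrier_mat (m*L) n0" unfolding X_def n0_def H_cum_def by simp
  have Y: "Y \<in> carrier_mat (m*L) ((p-pb)*n0)"
  proof -
    have "\<forall>i\<in>{pb+1..p}. T i = T 1"
    proof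
      fix i assume "i \<in> {pb+1..p}"
      then have "i \<in> {1..p}" using assms(1) by auto
      then show "T i = T 1" using assms(3) by blast
    qed
    from H_mos_carrier_eq[OF this, of m L z \<alpha>] show ?thesis by (simp add: n0_def Y_def)
  qed
  have YK: "Y * ones_kron_id (p-pb) n0 = H_cum m L (pb+1) p (T 1) z \<alpha>"
  proof -
    have "\<forall>i\<in>{pb+1..p}. T i = T 1"
    proof
      fix i assume "i \<in> {pb+1..p}"
      then have "i \<in> {1..p}" using assms(1) by auto
      then show "T i = T 1" using assms(3) by blast
    qed
    from F1[OF this, of m L z \<alpha>] show ?thesis by (simp add: n0_def Y_def)
  qed
  have E0: "p - pb + 1 = Suc (p - pb)" by simp
  have E1: "H_hyb m L p pb T z \<alpha> = hcat X Y"
    unfolding H_hyb_def X_def Y_def ..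
  have E2: "hcat X Y * ones_kron_id (Suc (p-pb)) n0 = X + H_cum m L (pb+1) p (T 1) z \<alpha>"
    using hcat_mult_ok[OF X Y] YK by simp
  have E3: "X + H_cum m L (pb+1) p (T 1) z \<alpha> = H_cum m L 1 p (T 1) z \<alpha>"
  proof (rule eq_matI)
    fix r c assume "r < dim_row (H_cum m L 1 p (T 1) z \<alpha>)" "c < dim_col (H_cum m L 1 p (T 1) z \<alpha>)"
    then have rc: "r < m*L" "c < n0" unfolding H_cum_def n0_def by auto
    have un: "{1..p} = {1..pb} \<union> {pb+1..p}" using assms(1,2) by auto
    have "(\<Sum>i\<in>{1..p}. \<alpha> i * hankel m L (T 1) (z i) $$ (r, c)) =
       (\<Sum>i\<in>{1..pb}. \<alpha> i * hankel m L (T 1) (z i) $$ (r, c)) + (\<Sum>i\<in>{pb+1..p}. \<alpha> i * hankel m L (T 1) (z i) $$ (r, c))"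
      unfolding un by (rule sum.union_disjoint) auto
    then show "(X + H_cum m L (pb+1) p (T 1) z \<alpha>) $$ (r, c) = H_cum m L 1 p (T 1) z \<alpha> $$ (r, c)"
      using rc unfolding X_def H_cum_def n0_def by simp
  qed (use X in \<open>simp_all add: H_cum_def\<close>)
  show ?thesis unfolding n0_def[symmetric] E0 E1 E2 E3 ..
qed

lemma H_cum_carrier: "H_cum m L a b T0 z \<alpha> \<in> carrier_mat (m*L) (T0 - L + 1)"
  unfolding H_cum_def by simp

lemma H_hyb_carrier_eq:
  assumes "1 \<le> pb" "pb < p" "\<forall>i\<in>{pb+1..p}. T i = T 1"
  shows "H_hyb m L p pb T z \<alpha> \<in> carrier_mat (m*L) ((p - pb + 1) * (T 1 - L + 1))"
proof -
  have "H_hyb m L p pb T z \<alpha> \<in> carrier_mat (m*L) ((T 1 - L + 1) + (p + 1 - (pb + 1)) * (T 1 - L + 1))"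
    unfolding H_hyb_def by (rule hcat_carrier[OF H_cum_carrier H_mos_carrier_eq[OF assms(3)]])
  moreover have "(T 1 - L + 1) + (p + 1 - (pb + 1)) * (T 1 - L + 1) = (p - pb + 1) * (T 1 - L + 1)"
  proof -
    have a: "p + 1 - (pb + 1) = p - pb" by simp
    have b: "x + k * x = (k + 1) * x" for x k :: nat by simp
    show ?thesis unfolding a by (rule b)
  qed
  ultimately show ?thesis by metis
qed

lemma H_mos_carrier_split:
  assumes "1 \<le> pb" "pb < p" "\<forall>i\<in>{1..pb}. T i = T 1"
  shows "H_mos m L 1 p T z \<alpha> \<in> carrier_mat (m*L) (pb * (T 1 - L + 1) + (\<Sum>i\<in>{pb+1..p}. T i - L + 1))"
proof -
  have "H_mos m L 1 p T z \<alpha> \<in> carrier_mat (m*L) ((pb + 1 - 1) * (T 1 - L + 1) + (\<Sum>i\<in>{pb+1..p}. T i - L + 1))"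
    unfolding H_mos_split[OF assms(1,2)]
    by (rule hcat_carrier[OF H_mos_carrier_eq[OF assms(3)] H_mos_carrier])
  then show ?thesis by simp
qed

theorem theorem1:
  fixes p m L :: nat and T :: "nat \<Rightarrow> nat" and z :: "nat \<Rightarrow> nat \<Rightarrow> real vec"
  assumes "p \<ge> 2" and "L \<ge> 1"
    and "\<forall>i\<in>{1..p}. T i \<ge> L"
    and "\<forall>i\<in>{1..p}. \<forall>k<T i. z i k \<in> carrier_vec m"
  shows
    \<comment> \<open>1)\<close>
    "(CCPE m L p T z \<longrightarrow> MCPE m L p T z \<and> (\<forall>pb. 1 \<le> pb \<and> pb < p \<longrightarrow> HCPE m L p pb T z))
     \<and>
     \<comment> \<open>2 i)\<close>
     (MCPE m L p T z \<and> (\<forall>i\<in>{1..p}. T i = T 1) \<and>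
       (\<forall>\<alpha>. nonzero_weights p \<alpha> \<longrightarrow>
          im_transpose (H_mos m L 1 p T z \<alpha>) \<inter> leftker (ones_kron_id p (T 1 - L + 1))
            = {0\<^sub>v (dim_col (H_mos m L 1 p T z \<alpha>))})
      \<longrightarrow> CCPE m L p T z)
     \<and>
     \<comment> \<open>2 ii)\<close>
     (\<forall>pb. 1 \<le> pb \<and> pb < p \<and> MCPE m L p T z \<and> (\<forall>i\<in>{1..pb}. T i = T 1) \<and>
       (\<forall>\<alpha>. nonzero_weights p \<alpha> \<longrightarrow>
          (let S = (\<Sum>i\<in>{pb+1..p}. T i - L + 1); n0 = T 1 - L + 1 in
           im_transpose (H_mos m L 1 p T z \<alpha>) \<inter>
             leftker (four_block_mat (ones_kron_id pb n0) (0\<^sub>m (pb * n0) S) (0\<^sub>m S n0) (1\<^sub>m S))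
            = {0\<^sub>v (dim_col (H_mos m L 1 p T z \<alpha>))}))
      \<longrightarrow> HCPE m L p pb T z)
     \<and>
     \<comment> \<open>3)\<close>
     (\<forall>pb. 1 \<le> pb \<and> pb < p \<and> HCPE m L p pb T z \<longrightarrow>
        MCPE m L p T z \<and>
        ((\<forall>i\<in>{pb+1..p}. T i = T 1) \<and>
          (\<forall>\<alpha>. nonzero_weights p \<alpha> \<longrightarrow>
             im_transpose (H_hyb m L p pb T z \<alpha>) \<inter> leftker (ones_kron_id (p - pb + 1) (T 1 - L + 1))
               = {0\<^sub>v (dim_col (H_hyb m L p pb T z \<alpha>))})
         \<longrightarrow> CCPE m L p T z))"
proof -
  define n0 where "n0 = T 1 - L + 1"
  have okc: "\<And>q. ones_kron_id q n0 \<in> carrier_mat (q*n0) n0" by simp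
  have mosc_all: "H_mos m L 1 p T z \<alpha> \<in> carrier_mat (m*L) (p*n0)"
    if eqT: "\<forall>i\<in>{1..p}. T i = T 1" for \<alpha>
    using H_mos_carrier_eq[OF eqT, of m L z \<alpha>] unfolding n0_def by simp
  have F1p: "H_mos m L 1 p T z \<alpha> * ones_kron_id p n0 = H_cum m L 1 p (T 1) z \<alpha>"
    if eqT: "\<forall>i\<in>{1..p}. T i = T 1" for \<alpha>
    using F1[OF eqT, of m L z \<alpha>] unfolding n0_def by simp
  have sub1: "\<forall>i\<in>{1..pb}. T i = T 1" if "\<forall>i\<in>{1..p}. T i = T 1" "pb < p" for pb
    using that by (metis atLeastAtMost_iff le_trans less_imp_le_nat)
  have sub2: "\<forall>i\<in>{pb+1..p}. T i = T 1" if "\<forall>i\<in>{1..p}. T i = T 1" for pb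
    using that by (metis atLeastAtMost_iff le_add2 le_trans)
  have all: "\<forall>i\<in>{1..p}. T i = T 1" if "\<forall>i\<in>{1..pb}. T i = T 1" "\<forall>i\<in>{pb+1..p}. T i = T 1" for pb
  proof
    fix i assume i: "i \<in> {1..p}"
    show "T i = T 1"
    proof (cases "i \<le> pb")
      case True
      then have "i \<in> {1..pb}" using i by simp
      then show ?thesis using that(1) by blast
    next
      case False
      then have "i \<in> {pb+1..p}" using i by simp
      then show ?thesis using that(2) by blast
    qed
  qed
  define K2 where "K2 = (\<lambda>pb. four_block_mat (ones_kron_id pb n0) (0\<^sub>m (pb * n0) (\<Sum>i\<in>{pb+1..p}. T i - L + 1))
        (0\<^sub>m (\<Sum>i\<in>{pb+1..p}. T i - L + 1) n0) (1\<^sub>m (\<Sum>i\<in>{pb+1..p}. T i - L + 1)))"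
  have K2c: "K2 pb \<in> carrier_mat (pb * n0 + (\<Sum>i\<in>{pb+1..p}. T i - L + 1)) (n0 + (\<Sum>i\<in>{pb+1..p}. T i - L + 1))" for pb
    unfolding K2_def by (rule four_block_carrier_mat) auto
  have F2': "H_hyb m L p pb T z \<alpha> = H_mos m L 1 p T z \<alpha> * K2 pb"
    if "1 \<le> pb" "pb < p" "\<forall>i\<in>{1..pb}. T i = T 1" for pb \<alpha>
    unfolding K2_def n0_def by (rule F2[OF that])
  have mosc_split: "H_mos m L 1 p T z \<alpha> \<in> carrier_mat (m*L) (pb * n0 + (\<Sum>i\<in>{pb+1..p}. T i - L + 1))"
    if "1 \<le> pb" "pb < p" "\<forall>i\<in>{1..pb}. T i = T 1" for pb \<alpha>
    unfolding n0_def by (rule H_mos_carrier_split[OF that])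
  have F3': "H_hyb m L p pb T z \<alpha> * ones_kron_id (p - pb + 1) n0 = H_cum m L 1 p (T 1) z \<alpha>"
    if "1 \<le> pb" "pb < p" "\<forall>i\<in>{1..p}. T i = T 1" for pb \<alpha>
    unfolding n0_def by (rule F3[OF that])
  have hybc: "H_hyb m L p pb T z \<alpha> \<in> carrier_mat (m*L) ((p - pb + 1) * n0)"
    if "1 \<le> pb" "pb < p" "\<forall>i\<in>{pb+1..p}. T i = T 1" for pb \<alpha>
    unfolding n0_def by (rule H_hyb_carrier_eq[OF that])

  have P1: "CCPE m L p T z \<longrightarrow> MCPE m L p T z \<and> (\<forall>pb. 1 \<le> pb \<and> pb < p \<longrightarrow> HCPE m L p pb T z)"
  proof
    assume C: "CCPE m L p T z"
    have eqT: "\<forall>i\<in>{1..p}. T i = T 1" using C unfolding CCPE_def by blast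
    have cum: "full_row_rank (H_cum m L 1 p (T 1) z \<alpha>)" if "nonzero_weights p \<alpha>" for \<alpha>
      using C that unfolding CCPE_def by blast
    have M: "MCPE m L p T z" unfolding MCPE_def
    proof (intro allI impI)
      fix \<alpha> assume nz: "nonzero_weights p \<alpha>"
      show "full_row_rank (H_mos m L 1 p T z \<alpha>)"
        by (rule frr_factor_L1[OF mosc_all[OF eqT] okc[of p]]) (unfold F1p[OF eqT], rule cum[OF nz])
    qed
    have "HCPE m L p pb T z" if pb: "1 \<le> pb" "pb < p" for pb
      unfolding HCPE_def
    proof (intro conjI allI impI)
      show "\<forall>i\<in>{1..pb}. T i = T 1" by (rule sub1[OF eqT pb(2)])
      fix \<alpha> assume nz: "nonzero_weights p \<alpha>"
      show "full_row_rank (H_hyb m L p pb T z \<alpha>)"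
        by (rule frr_factor_L1[OF hybc[OF pb sub2[OF eqT]] okc[of "p - pb + 1"]]) (unfold F3'[OF pb eqT], rule cum[OF nz])
    qed
    then show "MCPE m L p T z \<and> (\<forall>pb. 1 \<le> pb \<and> pb < p \<longrightarrow> HCPE m L p pb T z)" using M by blast
  qed

  have P2i: "(MCPE m L p T z \<and> (\<forall>i\<in>{1..p}. T i = T 1) \<and>
       (\<forall>\<alpha>. nonzero_weights p \<alpha> \<longrightarrow>
          im_transpose (H_mos m L 1 p T z \<alpha>) \<inter> leftker (ones_kron_id p (T 1 - L + 1))
            = {0\<^sub>v (dim_col (H_mos m L 1 p T z \<alpha>))})
      \<longrightarrow> CCPE m L p T z)"
  proof (intro impI, elim conjE)
    assume M: "MCPE m L p T z" and eqT: "\<forall>i\<in>{1..p}. T i = T 1"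
      and I: "\<forall>\<alpha>. nonzero_weights p \<alpha> \<longrightarrow>
          im_transpose (H_mos m L 1 p T z \<alpha>) \<inter> leftker (ones_kron_id p (T 1 - L + 1))
            = {0\<^sub>v (dim_col (H_mos m L 1 p T z \<alpha>))}"
    show "CCPE m L p T z" unfolding CCPE_def
    proof (intro conjI allI impI)
      show "\<forall>i\<in>{1..p}. T i = T 1" by (rule eqT)
      fix \<alpha> assume nz: "nonzero_weights p \<alpha>"
      have "full_row_rank (H_mos m L 1 p T z \<alpha> * ones_kron_id p n0)"
        by (rule frr_factor_L2[OF mosc_all[OF eqT] okc[of p]])
          (use M nz I in \<open>auto simp: MCPE_def n0_def\<close>)
      then show "full_row_rank (H_cum m L 1 p (T 1) z \<alpha>)" unfolding F1p[OF eqT, symmetric] .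
    qed
  qed

  have P2ii: "\<forall>pb. 1 \<le> pb \<and> pb < p \<and> MCPE m L p T z \<and> (\<forall>i\<in>{1..pb}. T i = T 1) \<and>
       (\<forall>\<alpha>. nonzero_weights p \<alpha> \<longrightarrow>
          (let S = (\<Sum>i\<in>{pb+1..p}. T i - L + 1); n0 = T 1 - L + 1 in
           im_transpose (H_mos m L 1 p T z \<alpha>) \<inter>
             leftker (four_block_mat (ones_kron_id pb n0) (0\<^sub>m (pb * n0) S) (0\<^sub>m S n0) (1\<^sub>m S))
            = {0\<^sub>v (dim_col (H_mos m L 1 p T z \<alpha>))}))
      \<longrightarrow> HCPE m L p pb T z"
  proof (intro allI impI, elim conjE)
    fix pb assume pb1: "1 \<le> pb" and pb2: "pb < p" and M: "MCPE m L p T z"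
      and eqT: "\<forall>i\<in>{1..pb}. T i = T 1"
      and I: "\<forall>\<alpha>. nonzero_weights p \<alpha> \<longrightarrow>
          (let S = (\<Sum>i\<in>{pb+1..p}. T i - L + 1); n0 = T 1 - L + 1 in
           im_transpose (H_mos m L 1 p T z \<alpha>) \<inter>
             leftker (four_block_mat (ones_kron_id pb n0) (0\<^sub>m (pb * n0) S) (0\<^sub>m S n0) (1\<^sub>m S))
            = {0\<^sub>v (dim_col (H_mos m L 1 p T z \<alpha>))})"
    show "HCPE m L p pb T z" unfolding HCPE_def
    proof (intro conjI allI impI)
      show "\<forall>i\<in>{1..pb}. T i = T 1" by (rule eqT)
      fix \<alpha> assume nz: "nonzero_weights p \<alpha>"
      have I': "im_transpose (H_mos m L 1 p T z \<alpha>) \<inter> leftker (K2 pb) = {0\<^sub>v (dim_col (H_mos m L 1 p T z \<alpha>))}"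
        using I nz unfolding K2_def n0_def Let_def by blast
      have "full_row_rank (H_mos m L 1 p T z \<alpha> * K2 pb)"
        by (rule frr_factor_L2[OF mosc_split[OF pb1 pb2 eqT] K2c])
          (use M nz I' in \<open>auto simp: MCPE_def\<close>)
      then show "full_row_rank (H_hyb m L p pb T z \<alpha>)" unfolding F2'[OF pb1 pb2 eqT] .
    qed
  qed

  have P3: "\<forall>pb. 1 \<le> pb \<and> pb < p \<and> HCPE m L p pb T z \<longrightarrow>
        MCPE m L p T z \<and>
        ((\<forall>i\<in>{pb+1..p}. T i = T 1) \<and>
          (\<forall>\<alpha>. nonzero_weights p \<alpha> \<longrightarrow>
             im_transpose (H_hyb m L p pb T z \<alpha>) \<inter> leftker (ones_kron_id (p - pb + 1) (T 1 - L + 1))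
               = {0\<^sub>v (dim_col (H_hyb m L p pb T z \<alpha>))})
         \<longrightarrow> CCPE m L p T z)"
  proof (intro allI impI, elim conjE, intro conjI impI)
    fix pb assume pb1: "1 \<le> pb" and pb2: "pb < p" and H: "HCPE m L p pb T z"
    have eqT: "\<forall>i\<in>{1..pb}. T i = T 1" using H unfolding HCPE_def by blast
    have hyb: "full_row_rank (H_hyb m L p pb T z \<alpha>)" if "nonzero_weights p \<alpha>" for \<alpha>
      using H that unfolding HCPE_def by blast
    show "MCPE m L p T z" unfolding MCPE_def
    proof (intro allI impI)
      fix \<alpha> assume nz: "nonzero_weights p \<alpha>"
      show "full_row_rank (H_mos m L 1 p T z \<alpha>)"
        by (rule frr_factor_L1[OF mosc_split[OF pb1 pb2 eqT] K2c]) (unfold F2'[OF pb1 pb2 eqT, symmetric], rule hyb[OF nz])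
    qed
    assume "(\<forall>i\<in>{pb+1..p}. T i = T 1) \<and>
          (\<forall>\<alpha>. nonzero_weights p \<alpha> \<longrightarrow>
             im_transpose (H_hyb m L p pb T z \<alpha>) \<inter> leftker (ones_kron_id (p - pb + 1) (T 1 - L + 1))
               = {0\<^sub>v (dim_col (H_hyb m L p pb T z \<alpha>))})"
    then have eq2: "\<forall>i\<in>{pb+1..p}. T i = T 1" and I: "\<forall>\<alpha>. nonzero_weights p \<alpha> \<longrightarrow>
             im_transpose (H_hyb m L p pb T z \<alpha>) \<inter> leftker (ones_kron_id (p - pb + 1) n0)
               = {0\<^sub>v (dim_col (H_hyb m L p pb T z \<alpha>))}" unfolding n0_def by blast+
    have eqA: "\<forall>i\<in>{1..p}. T i = T 1" by (rule all[OF eqT eq2])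
    show "CCPE m L p T z" unfolding CCPE_def
    proof (intro conjI allI impI)
      show "\<forall>i\<in>{1..p}. T i = T 1" by (rule eqA)
      fix \<alpha> assume nz: "nonzero_weights p \<alpha>"
      have "full_row_rank (H_hyb m L p pb T z \<alpha> * ones_kron_id (p - pb + 1) n0)"
        by (rule frr_factor_L2[OF hybc[OF pb1 pb2 eq2] okc[of "p - pb + 1"]])
          (use hyb[OF nz] nz I in \<open>auto\<close>)
      then show "full_row_rank (H_cum m L 1 p (T 1) z \<alpha>)" unfolding F3'[OF pb1 pb2 eqA, symmetric] .
    qed
  qed
  show ?thesis using P1 P2i P2ii P3 by blast
qed

end
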